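(* Let $\ell$ be any bounded proper binary scoring rule. Then there exists another proper binary scoring rule $\tilde\ell$ and a constant $c>0$ such that for every sufficiently large $T$ there exist forecasts $\mathbf{p}^{(T)}\in[0,1]^T$ and outcomes $\mathbf{x}^{(T)}\in\{0,1\}^T$ with $\mathrm{Reg}_\ell(\mathbf p^{(T)},\mathbf x^{(T)})=o(T)$ (as $T\to\infty$) but $\mathrm{Reg}_{\tilde\ell}(\mathbf p^{(T)},\mathbf x^{(T)})\ge cT$.
   Context: A binary scoring rule is a function $\ell:[0,1]\times\{0,1\}\to\mathbb{R}$. For $p,q\in[0,1]$ write $\ell(p;q)=(1-q)\ell(p,0)+q\ell(p,1)$. It is proper if $\ell(p;p)\le\ell(p';p)$ for all $p,p'\in[0,1]$, and bounded if all its values lie in $[-1,1]$. For outcomes $\mathbf x\in\{0,1\}^T$ and forecasts $\mathbf p\in[0,1]^T$, with base rate $\beta=\frac1T\sum_t x_t$, the regret is $\mathrm{Reg}_\ell(\mathbf p,\mathbf x)=\sum_{t=1}^T\ell(p_t,x_t)-\sum_{t=1}^T\ell(\beta,x_t)$. *)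

theory Defs
  imports Complex_Main "HOL-Library.Landau_Symbols"
begin

text \<open>A binary scoring rule: forecasts are reals (only [0,1] matters),
outcomes are naturals (only 0 and 1 matter).\<close>

definition exp_loss :: "(real \<Rightarrow> nat \<Rightarrow> real) \<Rightarrow> real \<Rightarrow> real \<Rightarrow> real" where
  "exp_loss l p q = (1 - q) * l p 0 + q * l p 1"

definition proper_rule :: "(real \<Rightarrow> nat \<Rightarrow> real) \<Rightarrow> bool" where
  "proper_rule l \<longleftrightarrow> (\<forall>p\<in>{0..1}. \<forall>p'\<in>{0..1}. exp_loss l p p \<le> exp_loss l p' p)"

definition bounded_rule :: "(real \<Rightarrow> nat \<Rightarrow> real) \<Rightarrow> bool" where
  "bounded_rule l \<longleftrightarrow> (\<forall>p\<in>{0..1}. \<forall>x\<in>{0,1}. l p x \<in> {-1..1})"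

definition base_rate :: "nat \<Rightarrow> (nat \<Rightarrow> nat) \<Rightarrow> real" where
  "base_rate T x = (\<Sum>t<T. real (x t)) / real T"

definition regret :: "(real \<Rightarrow> nat \<Rightarrow> real) \<Rightarrow> nat \<Rightarrow> (nat \<Rightarrow> real) \<Rightarrow> (nat \<Rightarrow> nat) \<Rightarrow> real" where
  "regret l T p x = (\<Sum>t<T. l (p t) (x t)) - (\<Sum>t<T. l (base_rate T x) (x t))"

end

theory Submission
  imports Defs
begin

definition Xs :: "nat \<Rightarrow> nat \<Rightarrow> nat" where
  "Xs h t = (if t < h then 1 else 0)"

definition Ps :: "nat \<Rightarrow> nat \<Rightarrow> nat \<Rightarrow> real" where
  "Ps m h t = (if t < m then 0 else if t < h then 1 else if t < h + m then 1 else 0)"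

lemma sum_split4:
  fixes g :: "nat \<Rightarrow> real"
  assumes "m \<le> h" "h + m \<le> T"
  shows "(\<Sum>t<T. g t) = (\<Sum>t\<in>{0..<m}. g t) + (\<Sum>t\<in>{m..<h}. g t) + (\<Sum>t\<in>{h..<h+m}. g t) + (\<Sum>t\<in>{h+m..<T}. g t)"
proof -
  have "(\<Sum>t<T. g t) = (\<Sum>t\<in>{0..<T}. g t)" by (simp add: lessThan_atLeast0)
  also have "\<dots> = (\<Sum>t\<in>{0..<m}. g t) + (\<Sum>t\<in>{m..<T}. g t)"
    using assms by (intro sum.atLeastLessThan_concat[symmetric]) auto
  also have "(\<Sum>t\<in>{m..<T}. g t) = (\<Sum>t\<in>{m..<h}. g t) + (\<Sum>t\<in>{h..<T}. g t)"
    using assms by (intro sum.atLeastLessThan_concat[symmetric]) auto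
  also have "(\<Sum>t\<in>{h..<T}. g t) = (\<Sum>t\<in>{h..<h+m}. g t) + (\<Sum>t\<in>{h+m..<T}. g t)"
    using assms by (intro sum.atLeastLessThan_concat[symmetric]) auto
  finally show ?thesis by simp
qed

lemma sumP:
  fixes f :: "real \<Rightarrow> nat \<Rightarrow> real"
  assumes "m \<le> h" "h + m \<le> T"
  shows "(\<Sum>t<T. f (Ps m h t) (Xs h t)) =
    real m * f 0 1 + real (h - m) * f 1 1 + real m * f 1 0 + real (T - h - m) * f 0 0"
proof -
  have "(\<Sum>t<T. f (Ps m h t) (Xs h t)) =
     (\<Sum>t\<in>{0..<m}. f (Ps m h t) (Xs h t)) + (\<Sum>t\<in>{m..<h}. f (Ps m h t) (Xs h t))
     + (\<Sum>t\<in>{h..<h+m}. f (Ps m h t) (Xs h t)) + (\<Sum>t\<in>{h+m..<T}. f (Ps m h t) (Xs h t))"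
    by (rule sum_split4[OF assms])
  also have "(\<Sum>t\<in>{0..<m}. f (Ps m h t) (Xs h t)) = (\<Sum>t\<in>{0..<m}. f 0 1)"
    using assms by (intro sum.cong) (auto simp: Ps_def Xs_def)
  also have "(\<Sum>t\<in>{m..<h}. f (Ps m h t) (Xs h t)) = (\<Sum>t\<in>{m..<h}. f 1 1)"
    using assms by (intro sum.cong) (auto simp: Ps_def Xs_def)
  also have "(\<Sum>t\<in>{h..<h+m}. f (Ps m h t) (Xs h t)) = (\<Sum>t\<in>{h..<h+m}. f 1 0)"
    using assms by (intro sum.cong) (auto simp: Ps_def Xs_def)
  also have "(\<Sum>t\<in>{h+m..<T}. f (Ps m h t) (Xs h t)) = (\<Sum>t\<in>{h+m..<T}. f 0 0)"
    using assms by (intro sum.cong) (auto simp: Ps_def Xs_def)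
  finally show ?thesis using assms by (simp add: of_nat_diff)
qed

lemma sumX:
  fixes f :: "nat \<Rightarrow> real"
  assumes "h \<le> T"
  shows "(\<Sum>t<T. f (Xs h t)) = real h * f 1 + real (T - h) * f 0"
proof -
  have "(\<Sum>t<T. f (Xs h t)) = (\<Sum>t\<in>{0..<T}. f (Xs h t))" by (simp add: lessThan_atLeast0)
  also have "\<dots> = (\<Sum>t\<in>{0..<h}. f (Xs h t)) + (\<Sum>t\<in>{h..<T}. f (Xs h t))"
    using assms by (intro sum.atLeastLessThan_concat[symmetric]) auto
  also have "(\<Sum>t\<in>{0..<h}. f (Xs h t)) = (\<Sum>t\<in>{0..<h}. f 1)"
    by (intro sum.cong) (auto simp: Xs_def)
  also have "(\<Sum>t\<in>{h..<T}. f (Xs h t)) = (\<Sum>t\<in>{h..<T}. f 0)"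
    by (intro sum.cong) (auto simp: Xs_def)
  finally show ?thesis by simp
qed

lemma base_rate_Xs:
  assumes "h \<le> T"
  shows "base_rate T (Xs h) = real h / real T"
  using sumX[OF assms, of real] by (simp add: base_rate_def)

lemma proper_indicator:
  "proper_rule (\<lambda>p x. if (p = 0 \<and> x = 1) \<or> (p = 1 \<and> x = 0) then 1 else 0)"
  unfolding proper_rule_def exp_loss_def by auto

lemma proper_brier:
  "proper_rule (\<lambda>p x. (p - real x)^2)"
  unfolding proper_rule_def exp_loss_def
proof (intro ballI)
  fix p p' :: real
  have "(1 - p) * (p' - 0)^2 + p * (p' - 1)^2 - ((1 - p) * (p - 0)^2 + p * (p - 1)^2) = (p' - p)^2"
    by (simp add: power2_eq_square algebra_simps)
  then show "(1 - p) * (p - real 0)^2 + p * (p - real 1)^2 \<le> (1 - p) * (p' - real 0)^2 + p * (p' - real 1)^2"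
    by (smt (verit) of_nat_0 of_nat_1 zero_le_power2)
qed


theorem theorem3p2:
  fixes l :: "real \<Rightarrow> nat \<Rightarrow> real"
  assumes "proper_rule l" and "bounded_rule l"
  shows "\<exists>l' :: real \<Rightarrow> nat \<Rightarrow> real. proper_rule l' \<and>
    (\<exists>c::real. c > 0 \<and>
      (\<exists>P :: nat \<Rightarrow> nat \<Rightarrow> real. \<exists>X :: nat \<Rightarrow> nat \<Rightarrow> nat.
        (\<forall>\<^sub>F T in sequentially. (\<forall>t<T. P T t \<in> {0..1} \<and> X T t \<in> {0,1})) \<and>
        (\<lambda>T. regret l T (P T) (X T)) \<in> o(\<lambda>T. real T) \<and>
        (\<forall>\<^sub>F T in sequentially. regret l' T (P T) (X T) \<ge> c * real T)))"
proof -
  have pr: "(1-q)*l q 0 + q*l q 1 \<le> (1-q)*l p' 0 + q*l p' 1"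
    if "q \<in> {0..1}" "p' \<in> {0..1}" for q p'
    using assms(1) that unfolding proper_rule_def exp_loss_def by blast
  have bd: "l p x \<in> {-1..1}" if "p \<in> {0..1}" "x \<in> {0,1}" for p x
    using assms(2) that unfolding bounded_rule_def by blast
  define a where "a = l 0 0"
  define b where "b = l 1 1"
  define G where "G q = (1-q)*l q 0 + q*l q 1" for q
  define J where "J q = G q - (1-q)*a - q*b" for q
  have l0: "l q 0 \<ge> a" if "q \<in> {0..1}" for q
    using pr[of 0 q] that by (simp add: a_def)
  have l1: "l q 1 \<ge> b" if "q \<in> {0..1}" for q
    using pr[of 1 q] that by (simp add: b_def)
  show ?thesis
  proof (cases "J (1/2) = 0")
    case True
    have e: "l (1/2) 0 = a"
      using True l0[of "1/2"] l1[of "1/2"] by (simp add: J_def G_def)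
    define l' where "l' = (\<lambda>(p::real) (x::nat). (p - real x)^2)"
    have reg: "regret l T (\<lambda>t. 1/2) (\<lambda>t. 0) = 0" for T
      by (simp add: regret_def base_rate_def e a_def)
    have reg': "regret l' T (\<lambda>t. 1/2) (\<lambda>t. 0) = real T / 4" for T
      by (simp add: regret_def base_rate_def l'_def power2_eq_square)
    show ?thesis
      apply (rule exI[of _ l'])
      apply (intro conjI)
      subgoal unfolding l'_def by (rule proper_brier)
      apply (rule exI[of _ "1/4"])
      apply (intro conjI)
      subgoal by simp
      apply (rule exI[of _ "\<lambda>T t. 1/2"])
      apply (rule exI[of _ "\<lambda>T t. 0"])
      apply (intro conjI)
      subgoal by simp
      subgoal by (simp add: reg)
      subgoal by (simp add: reg')
      done
  next
    case False
    have Jh: "J (1/2) > 0"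
      using False l0[of "1/2"] l1[of "1/2"] by (simp add: J_def G_def)
    define D where "D = l 1 0 + l 0 1 - a - b"
    have JleD: "J q \<le> q * D" if q: "q \<in> {0..1}" for q
    proof -
      have "G q \<le> (1-q)*a + q * l 0 1" using pr[of q 0] q by (simp add: G_def a_def)
      moreover have "l 1 0 \<ge> a" using l0[of 1] by simp
      moreover have "q * a \<le> q * l 1 0" using \<open>l 1 0 \<ge> a\<close> q by (intro mult_left_mono) auto
      ultimately show ?thesis unfolding J_def D_def by (simp add: algebra_simps)
    qed
    have Jlow: "J q \<ge> 2*q*J(1/2)" if q: "q \<in> {0..1/2}" for q
    proof -
      have h1: "(1/2)*l (1/2) 0 + (1/2)*l (1/2) 1 \<le> (1/2)*l q 0 + (1/2)*l q 1"
        using pr[of "1/2" q] q by simp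
      have h2: "l q 0 \<ge> a" using l0[of q] q by simp
      have "G q = (1-2*q)*l q 0 + 2*q*((1/2)*l q 0 + (1/2)*l q 1)"
        by (simp add: G_def algebra_simps)
      also have "\<dots> \<ge> (1-2*q)*a + 2*q*G (1/2)"
      proof -
        have "(1-2*q)*a \<le> (1-2*q)*l q 0" using h2 q by (intro mult_left_mono) auto
        moreover have "2*q*G (1/2) \<le> 2*q*((1/2)*l q 0 + (1/2)*l q 1)"
          using h1 q unfolding G_def by (intro mult_left_mono) auto
        ultimately show ?thesis by linarith
      qed
      finally show ?thesis unfolding J_def by (simp add: algebra_simps)
    qed
    have Dpos: "D > 0" using JleD[of "1/2"] Jh by simp
    have Dle: "D \<le> 4"
      using bd[of 1 0] bd[of 0 1] bd[of 0 0] bd[of 1 1] unfolding D_def a_def b_def by auto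
    define h where "h T = T div 2" for T :: nat
    define \<beta> where "\<beta> T = real (h T) / real T" for T
    define m where "m T = nat \<lfloor>real T * J (\<beta> T) / D\<rfloor>" for T
    define l' where "l' = (\<lambda>(p::real) (x::nat). if (p = 0 \<and> x = 1) \<or> (p = 1 \<and> x = 0) then 1 else (0::real))"
    have key: "m T \<le> h T \<and> h T + m T \<le> T \<and>
       regret l T (Ps (m T) (h T)) (Xs (h T)) = real (m T) * D - real T * J (\<beta> T) \<and>
       real T * J (\<beta> T) / D - 1 < real (m T) \<and> real (m T) \<le> real T * J (\<beta> T) / D \<and>
       regret l' T (Ps (m T) (h T)) (Xs (h T)) = 2 * real (m T) \<and>
       J (\<beta> T) \<ge> (2/3) * J (1/2)"
      if T: "T \<ge> 2" for T
    proof -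
      have hT: "2 * h T \<le> T" "T \<le> 3 * h T" "h T \<ge> 1" using T unfolding h_def by auto
      have bT: "\<beta> T \<in> {1/3..1/2}" using hT T unfolding \<beta>_def by (auto simp: field_simps)
      have bT1: "\<beta> T \<in> {0..1}" "\<beta> T \<in> {0..1/2}" using bT by auto
      have Tb: "real T * \<beta> T = real (h T)" using T unfolding \<beta>_def by simp
      have Jb: "J (\<beta> T) \<ge> (2/3) * J (1/2)"
      proof -
        have "(2/3) * J (1/2) \<le> 2 * \<beta> T * J (1/2)"
          using bT Jh by (intro mult_right_mono) auto
        then show ?thesis using Jlow[OF bT1(2)] by linarith
      qed
      have Jb0: "J (\<beta> T) \<ge> 0" using Jb Jh by simp
      have x0: "real T * J (\<beta> T) / D \<ge> 0" using Jb0 Dpos by simp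
      have mfl: "real (m T) = of_int \<lfloor>real T * J (\<beta> T) / D\<rfloor>"
        unfolding m_def using x0 by simp
      have mle: "real (m T) \<le> real T * J (\<beta> T) / D" using mfl by simp
      have mgt: "real T * J (\<beta> T) / D - 1 < real (m T)" using mfl by linarith
      have "real T * J (\<beta> T) / D \<le> real T * (\<beta> T * D) / D"
        using JleD[OF bT1(1)] Dpos by (intro divide_right_mono mult_left_mono) auto
      also have "\<dots> = real (h T)" using Dpos Tb by simp
      finally have mh: "m T \<le> h T" using mle by linarith
      have hm: "h T + m T \<le> T" using mh hT by linarith
      have regl: "regret l T (Ps (m T) (h T)) (Xs (h T)) = real (m T) * D - real T * J (\<beta> T)"
      proof -
        have s1: "(\<Sum>t<T. l (Ps (m T) (h T) t) (Xs (h T) t)) =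
          real (m T) * l 0 1 + real (h T - m T) * l 1 1 + real (m T) * l 1 0 + real (T - h T - m T) * l 0 0"
          by (rule sumP[OF mh hm])
        have s2: "(\<Sum>t<T. l (\<beta> T) (Xs (h T) t)) = real (h T) * l (\<beta> T) 1 + real (T - h T) * l (\<beta> T) 0"
          using sumX[of "h T" T "l (\<beta> T)"] hT by simp
        have br: "base_rate T (Xs (h T)) = \<beta> T" using base_rate_Xs[of "h T" T] hT unfolding \<beta>_def by simp
        have TG: "real T * G (\<beta> T) = real (T - h T) * l (\<beta> T) 0 + real (h T) * l (\<beta> T) 1"
        proof -
          have "real T * G (\<beta> T) = (real T - real T * \<beta> T) * l (\<beta> T) 0 + (real T * \<beta> T) * l (\<beta> T) 1"
            by (simp add: G_def algebra_simps)
          then show ?thesis using Tb hT by (simp add: of_nat_diff)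
        qed
        have TJ: "real T * J (\<beta> T) = real T * G (\<beta> T) - (real T - real (h T)) * a - real (h T) * b"
        proof -
          have "real T * J (\<beta> T) = real T * G (\<beta> T) - (real T - real T * \<beta> T) * a - (real T * \<beta> T) * b"
            by (simp add: J_def algebra_simps)
          then show ?thesis using Tb by simp
        qed
        show ?thesis
          unfolding regret_def br s1 s2 TJ using TG mh hm hT
          by (simp add: of_nat_diff D_def a_def b_def algebra_simps)
      qed
      have regl': "regret l' T (Ps (m T) (h T)) (Xs (h T)) = 2 * real (m T)"
      proof -
        have s1: "(\<Sum>t<T. l' (Ps (m T) (h T) t) (Xs (h T) t)) = 2 * real (m T)"
          using sumP[OF mh hm, of l'] by (simp add: l'_def)
        have ne: "\<beta> T \<noteq> 0" "\<beta> T \<noteq> 1" using bT by auto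
        have br: "base_rate T (Xs (h T)) = \<beta> T" using base_rate_Xs[of "h T" T] hT unfolding \<beta>_def by simp
        have s2: "(\<Sum>t<T. l' (\<beta> T) (Xs (h T) t)) = 0" using ne by (simp add: l'_def)
        show ?thesis unfolding regret_def br s1 s2 by simp
      qed
      show ?thesis using mh hm regl mgt mle regl' Jb by blast
    qed
    show ?thesis
    proof (intro exI[of _ l'] conjI exI[of _ "J (1/2) / 6"] exI[of _ "\<lambda>T. Ps (m T) (h T)"] exI[of _ "\<lambda>T. Xs (h T)"])
      show "proper_rule l'" unfolding l'_def by (rule proper_indicator)
      show "J (1/2) / 6 > 0" using Jh by simp
      show "\<forall>\<^sub>F T in sequentially. \<forall>t<T. Ps (m T) (h T) t \<in> {0..1} \<and> Xs (h T) t \<in> {0, 1}"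
        by (intro always_eventually allI impI) (auto simp: Ps_def Xs_def)
      show "(\<lambda>T. regret l T (Ps (m T) (h T)) (Xs (h T))) \<in> o(\<lambda>T. real T)"
      proof (rule landau_o.smallI)
        fix c :: real assume c: "c > 0"
        have "eventually (\<lambda>T. T \<ge> max 2 (nat \<lceil>4 / c\<rceil>)) sequentially"
          by (rule eventually_ge_at_top)
        then show "eventually (\<lambda>T. norm (regret l T (Ps (m T) (h T)) (Xs (h T))) \<le> c * norm (real T)) sequentially"
        proof (rule eventually_mono)
          fix T assume T: "T \<ge> max 2 (nat \<lceil>4 / c\<rceil>)"
          then have T2: "T \<ge> 2" by simp
          have "real T \<ge> 4 / c" using T by linarith
          then have cT: "c * real T \<ge> 4" using c by (simp add: field_simps)
          note k = key[OF T2]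
          have A: "real (m T) * D \<le> real T * J (\<beta> T)"
            using k Dpos by (simp add: field_simps)
          have B: "real T * J (\<beta> T) - D < real (m T) * D"
            using k Dpos by (simp add: field_simps)
          show "norm (regret l T (Ps (m T) (h T)) (Xs (h T))) \<le> c * norm (real T)"
            using k A B Dle cT by simp
        qed
      qed
      show "\<forall>\<^sub>F T in sequentially. J (1/2) / 6 * real T \<le> regret l' T (Ps (m T) (h T)) (Xs (h T))"
      proof -
        have "eventually (\<lambda>T. T \<ge> max 2 (nat \<lceil>12 / J (1/2)\<rceil>)) sequentially"
          by (rule eventually_ge_at_top)
        then show ?thesis
        proof (rule eventually_mono)
          fix T assume T: "T \<ge> max 2 (nat \<lceil>12 / J (1/2)\<rceil>)"
          then have T2: "T \<ge> 2" by simp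
          have "real T \<ge> 12 / J (1/2)" using T by linarith
          then have cT: "J (1/2) * real T \<ge> 12" using Jh by (simp add: field_simps)
          note k = key[OF T2]
          have B: "real T * J (\<beta> T) - D < real (m T) * D"
            using k Dpos by (simp add: field_simps)
          have C: "real T * ((2/3) * J (1/2)) \<le> real T * J (\<beta> T)"
            using k by (intro mult_left_mono) auto
          have E: "real T * ((2/3) * J (1/2)) < (real (m T) + 1) * 4"
          proof -
            have "real T * ((2/3) * J (1/2)) < (real (m T) + 1) * D" using B C by (simp add: algebra_simps)
            also have "\<dots> \<le> (real (m T) + 1) * 4" using Dle by (intro mult_left_mono) auto
            finally show ?thesis .
          qed
          show "J (1/2) / 6 * real T \<le> regret l' T (Ps (m T) (h T)) (Xs (h T))"
            using k E cT by (simp add: algebra_simps)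
        qed
      qed
    qed
  qed
qed

end
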